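(* Fix integers $t\geq 1$ and $s\geq 3$. Then, as $m\to\infty$ (with $m\ge s$), \[ \frac{t}{(s-1)!}\, m^{s-2}+O(m^{s-3}\log m) \leq R_t(m-s,m)\leq \frac{t}{(s-2)!}\,m^{s-2}+O(m^{s-3}), \] where the constants in the $O(\cdot)$ terms may depend on $s$ and $t$.
   Context: For a $t\times n$ matrix $\mathbf{v}$ over $\mathbb{F}_q$ with rows $\overline{v}_1,\dots,\overline{v}_t$, its $t$-weight is $\mathrm{wt}^{(t)}(\mathbf{v})=\left|\bigcup_{i=1}^t \mathrm{supp}(\overline{v}_i)\right|$, and $d^{(t)}(\mathbf{u},\mathbf{v})=\mathrm{wt}^{(t)}(\mathbf{u}-\mathbf{v})$. For a linear code $C\subseteq\mathbb{F}_q^n$ and $t\in\mathbb{N}$, let $C^t$ be the set of $t\times n$ matrices all of whose rows lie in $C$. The $t$-th generalized covering radius $R_t(C)$ is the smallest integer $\rho$ such that for every $\mathbf{v}\in\mathbb{F}_q^{t\times n}$ there is $\mathbf{c}\in C^t$ with $d^{(t)}(\mathbf{v},\mathbf{c})\leq \rho$. Binary Reed–Muller codes $\mathrm{RM}(r,m)\subseteq\mathbb{F}_2^{2^m}$ ($0\le r\le m$) are defined recursively: $\mathrm{RM}(0,m)=\{\overline{0},\overline{1}\}$, $\mathrm{RM}(m,m)=\mathbb{F}_2^{2^m}$, and for $1\leq r\leq m-1$, $\mathrm{RM}(r,m)=\{(\overline{u},\overline{u}+\overline{v}) : \overline{u}\in \mathrm{RM}(r,m-1),\ \overline{v}\in\mathrm{RM}(r-1,m-1)\}$.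 It is a linear code of length $2^m$ and dimension $\sum_{i=0}^r\binom{m}{i}$. Write $R_t(r,m)=R_t(\mathrm{RM}(r,m))$. *)

theory Defs
  imports Complex_Main "HOL-Library.Landau_Symbols"
begin

text \<open>Binary words of length n are boolean lists of length n (False = 0, True = 1,
  addition in F_2 is exclusive or).\<close>

definition word_add :: "bool list \<Rightarrow> bool list \<Rightarrow> bool list" where
  "word_add u v = map2 (\<noteq>) u v"

text \<open>Binary Reed--Muller code RM(r,m), following the recursive definition of the paper.
  (For r > m we take the full space; this case is never used.)\<close>

fun RM :: "nat \<Rightarrow> nat \<Rightarrow> bool list set" where
  "RM r m =
     (if r = 0 then {replicate (2^m) False, replicate (2^m) True}
      else if m \<le> r then {w. length w = 2^m}
      else {u @ word_add u v | u v. u \<in> RM r (m - 1) \<and> v \<in> RM (r - 1) (m - 1)})"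

text \<open>A t x n matrix is represented by its rows V 0, ..., V (t-1), each a word of length n.
  The t-distance is the size of the union of the supports of the rows of V - W.\<close>

definition t_dist :: "nat \<Rightarrow> nat \<Rightarrow> (nat \<Rightarrow> bool list) \<Rightarrow> (nat \<Rightarrow> bool list) \<Rightarrow> nat" where
  "t_dist t n V W = card {j. j < n \<and> (\<exists>i<t. V i ! j \<noteq> W i ! j)}"

definition gen_cov_radius :: "nat \<Rightarrow> nat \<Rightarrow> bool list set \<Rightarrow> nat" where
  "gen_cov_radius t n C =
     (LEAST \<rho>. \<forall>V. (\<forall>i<t. length (V i) = n) \<longrightarrow>
                    (\<exists>W. (\<forall>i<t. W i \<in> C) \<and> t_dist t n V W \<le> \<rho>))"

definition R_RM :: "nat \<Rightarrow> nat \<Rightarrow> nat \<Rightarrow> nat" where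
  "R_RM t r m = gen_cov_radius t (2^m) (RM r m)"

end

theory Submission
  imports Defs "HOL-Library.FuncSet"
begin


fun cnt :: "nat \<Rightarrow> nat set \<Rightarrow> bool list \<Rightarrow> nat" where
  "cnt 0 T w = (if T = {} \<and> w ! 0 then 1 else 0)"
| "cnt (Suc k) T w = (if k \<in> T then 0 else cnt k T (take (2^k) w)) + cnt k (T - {k}) (drop (2^k) w)"

declare RM.simps[simp del]

lemma cnt_repl: "cnt k T (replicate (2^k) False) = 0"
  by (induction k arbitrary: T) (auto simp: take_replicate drop_replicate)

lemma RM_len: "w \<in> RM r m \<Longrightarrow> length w = 2^m"
proof (induction m arbitrary: r w)
  case 0
  then show ?case by (subst (asm) RM.simps) (auto split: if_splits)
next
  case (Suc k)
  show ?case
  proof (cases "r = 0 \<or> Suc k \<le> r")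
    case True
    then show ?thesis using Suc.prems by (subst (asm) RM.simps) (auto split: if_splits)
  next
    case False
    then obtain u v where "w = u @ word_add u v" "u \<in> RM r k" "v \<in> RM (r-1) k"
      using Suc.prems by (subst (asm) RM.simps) auto
    then show ?thesis using Suc.IH[of u r] Suc.IH[of v "r-1"] by (auto simp: word_add_def)
  qed
qed

lemma zero_in_RM: "replicate (2^m) False \<in> RM r m"
proof (induction m arbitrary: r)
  case 0
  then show ?case by (subst RM.simps) auto
next
  case (Suc k)
  show ?case
  proof (cases "r = 0 \<or> Suc k \<le> r")
    case True
    then show ?thesis by (subst RM.simps) auto
  next
    case False
    have "replicate (2^Suc k) False = replicate (2^k) False @ word_add (replicate (2^k) False) (replicate (2^k) False)"
      by (simp add: word_add_def replicate_add[symmetric] zip_replicate mult_2)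
    then show ?thesis using False Suc.IH[of r] Suc.IH[of "r-1"] by (subst RM.simps) auto
  qed
qed

lemma word_add_len: "length (word_add x y) = min (length x) (length y)"
  by (simp add: word_add_def)

lemma word_add_nth: "j < length x \<Longrightarrow> j < length y \<Longrightarrow> word_add x y ! j = (x ! j \<noteq> y ! j)"
  by (simp add: word_add_def)

lemma take_word_add: "take n (word_add x y) = word_add (take n x) (take n y)"
  by (simp add: word_add_def take_zip take_map)

lemma drop_word_add: "drop n (word_add x y) = word_add (drop n x) (drop n y)"
  by (simp add: word_add_def drop_zip drop_map)

lemma cnt_add:
  "length x = 2^m \<Longrightarrow> length y = 2^m \<Longrightarrow>
   even (cnt m T (word_add x y)) \<longleftrightarrow> (even (cnt m T x) \<longleftrightarrow> even (cnt m T y))"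
proof (induction m arbitrary: T x y)
  case 0
  then show ?case by (auto simp: word_add_nth)
next
  case (Suc k)
  have l: "length (take (2^k) x) = 2^k" "length (take (2^k) y) = 2^k"
       "length (drop (2^k) x) = 2^k" "length (drop (2^k) y) = 2^k" using Suc.prems by auto
  show ?case
    using Suc.IH[OF l(1,2), of T] Suc.IH[OF l(3,4), of "T - {k}"]
    by (auto simp: take_word_add drop_word_add)
qed

lemma cnt_zero:
  "length w = 2^m \<Longrightarrow> (\<forall>T. T \<subseteq> {..<m} \<longrightarrow> even (cnt m T w)) \<Longrightarrow> w = replicate (2^m) False"
proof (induction m arbitrary: w)
  case 0
  then have "\<not> w ! 0" using 0(2)[rule_format, of "{}"] by auto
  moreover from 0 obtain b where "w = [b]" by (auto simp: length_Suc_conv)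
  ultimately show ?case by auto
next
  case (Suc k)
  let ?w1 = "take (2^k) w" and ?w2 = "drop (2^k) w"
  have w2: "?w2 = replicate (2^k) False"
  proof (rule Suc.IH)
    show "length ?w2 = 2^k" using Suc.prems by auto
    show "\<forall>T. T \<subseteq> {..<k} \<longrightarrow> even (cnt k T ?w2)"
    proof (intro allI impI)
      fix T assume T: "T \<subseteq> {..<k}"
      then have "k \<notin> T" "insert k T - {k} = T" by auto
      moreover have "insert k T \<subseteq> {..<Suc k}" using T by auto
      ultimately show "even (cnt k T ?w2)"
        using Suc.prems(2)[rule_format, of "insert k T"] by auto
    qed
  qed
  have w1: "?w1 = replicate (2^k) False"
  proof (rule Suc.IH)
    show "length ?w1 = 2^k" using Suc.prems by auto
    show "\<forall>T. T \<subseteq> {..<k} \<longrightarrow> even (cnt k T ?w1)"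
    proof (intro allI impI)
      fix T assume T: "T \<subseteq> {..<k}"
      then have "k \<notin> T" by auto
      moreover have "even (cnt k T ?w2)" using w2 by (simp add: cnt_repl)
      moreover have "T \<subseteq> {..<Suc k}" using T by auto
      ultimately show "even (cnt k T ?w1)"
        using Suc.prems(2)[rule_format, of "T"] by auto
    qed
  qed
  have "w = ?w1 @ ?w2" by simp
  also have "\<dots> = replicate (2^Suc k) False" using w1 w2 by (simp add: replicate_add[symmetric] mult_2)
  finally show ?case .
qed

lemma cnt_split_notin: "k \<notin> T \<Longrightarrow> cnt (Suc k) T w = cnt k T (take (2^k) w) + cnt k T (drop (2^k) w)"
  by simp

lemma cnt_split_in: "k \<notin> T \<Longrightarrow> cnt (Suc k) (insert k T) w = cnt k T (drop (2^k) w)"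
  by simp

lemma chk_mem:
  "length w = 2^m \<Longrightarrow> (\<forall>T. T \<subseteq> {..<m} \<and> card T + r < m \<longrightarrow> even (cnt m T w)) \<Longrightarrow> w \<in> RM r m"
proof (induction m arbitrary: r w)
  case 0
  then obtain b where "w = [b]" by (auto simp: length_Suc_conv)
  then show ?case by (subst RM.simps) (cases b, auto)
next
  case (Suc k)
  let ?w1 = "take (2^k) w" and ?w2 = "drop (2^k) w"
  have l1: "length ?w1 = 2^k" and l2: "length ?w2 = 2^k" using Suc.prems by auto
  have fin: "\<And>T. T \<subseteq> {..<k} \<Longrightarrow> finite T" using finite_subset by blast
  have w1chk: "even (cnt k T ?w1)" if T: "T \<subseteq> {..<k}" "card T + r < k" for T
  proof -
    have "k \<notin> T" using T by auto
    moreover have "insert k T \<subseteq> {..<Suc k}" "T \<subseteq> {..<Suc k}" using T by auto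
    moreover have "card (insert k T) = Suc (card T)" using \<open>k \<notin> T\<close> fin[OF T(1)] by simp
    ultimately show ?thesis
      using Suc.prems(2)[rule_format, of "insert k T"] Suc.prems(2)[rule_format, of T] T(2)
      by auto
  qed
  have vchk: "even (cnt k T (word_add ?w1 ?w2))" if T: "T \<subseteq> {..<k}" "card T + r < Suc k" for T
  proof -
    have "k \<notin> T" using T by auto
    moreover have "T \<subseteq> {..<Suc k}" using T by auto
    ultimately show ?thesis
      using Suc.prems(2)[rule_format, of T] T(2) cnt_add[OF l1 l2, of T]
      by auto
  qed
  have RMeq: "RM r (Suc k) = (if r = 0 then {replicate (2^Suc k) False, replicate (2^Suc k) True}
      else if Suc k \<le> r then {w. length w = 2^Suc k}
      else {u @ word_add u v | u v. u \<in> RM r k \<and> v \<in> RM (r - 1) k})"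
    by (subst RM.simps) simp
  show ?case
  proof (cases "r = 0")
    case True
    have "?w1 \<in> RM 0 k" using Suc.IH[OF l1] w1chk True by blast
    then have "?w1 \<in> {replicate (2^k) False, replicate (2^k) True}" using l1
      by (subst (asm) RM.simps) (auto split: if_splits)
    then obtain b where b: "?w1 = replicate (2^k) b" by blast
    have "word_add ?w1 ?w2 = replicate (2^k) False"
    proof (rule cnt_zero)
      show "length (word_add ?w1 ?w2) = 2^k" using l1 l2 by (simp add: word_add_len)
      show "\<forall>T. T \<subseteq> {..<k} \<longrightarrow> even (cnt k T (word_add ?w1 ?w2))"
      proof (intro allI impI)
        fix T assume T: "T \<subseteq> {..<k}"
        have "card T \<le> card {..<k}" using T by (intro card_mono) auto
        then have "card T + r < Suc k" using True by simp
        then show "even (cnt k T (word_add ?w1 ?w2))" using vchk T by blast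
      qed
    qed
    then have "?w2 = replicate (2^k) b"
    proof (intro nth_equalityI)
      fix i assume eq: "word_add ?w1 ?w2 = replicate (2^k) False" and i: "i < length ?w2"
      then have "word_add ?w1 ?w2 ! i = False" using l2 by simp
      then have "?w1 ! i = ?w2 ! i" using i l1 l2 by (simp add: word_add_nth)
      then show "?w2 ! i = replicate (2^k) b ! i" using b i l1 l2 by simp
    qed (use l2 in simp)
    then have "w = replicate (2^k) b @ replicate (2^k) b" using b
      by (metis append_take_drop_id)
    then have "w = replicate (2^Suc k) b"
      by (simp add: replicate_add[symmetric] mult_2)
    then show ?thesis using True RMeq by (cases b) simp_all
  next
    case False
    show ?thesis
    proof (cases "Suc k \<le> r")
      case True
      then show ?thesis using False Suc.prems(1) RMeq by simp
    next
      case nle: False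
      have u: "?w1 \<in> RM r k" using Suc.IH[OF l1] w1chk by blast
      have lv: "length (word_add ?w1 ?w2) = 2^k" using l1 l2 by (simp add: word_add_len)
      have v: "word_add ?w1 ?w2 \<in> RM (r-1) k"
      proof (rule Suc.IH[OF lv, rule_format])
        fix T assume "T \<subseteq> {..<k} \<and> card T + (r - 1) < k"
        then have "T \<subseteq> {..<k}" "card T + r < Suc k" using False by auto
        then show "even (cnt k T (word_add ?w1 ?w2))" using vchk by blast
      qed
      have "word_add ?w1 (word_add ?w1 ?w2) = ?w2" using l1 l2
        by (intro nth_equalityI) (auto simp: word_add_len word_add_nth)
      then have "w = ?w1 @ word_add ?w1 (word_add ?w1 ?w2)" by simp
      then have "w \<in> {u @ word_add u v | u v. u \<in> RM r k \<and> v \<in> RM (r - 1) k}"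
        using u v by blast
      then show ?thesis using False nle RMeq by simp
    qed
  qed
qed

fun ind :: "nat \<Rightarrow> nat set list \<Rightarrow> bool list" where
  "ind 0 ps = [odd (length ps)]"
| "ind (Suc k) ps = ind k (filter (\<lambda>p. k \<notin> p) ps) @ ind k (map (\<lambda>p. p - {k}) (filter (\<lambda>p. k \<in> p) ps))"

lemma ind_len: "length (ind m ps) = 2^m"
  by (induction m arbitrary: ps) auto

lemma ind_wt: "length (filter (\<lambda>b. b) (ind m ps)) \<le> length ps"
proof (induction m arbitrary: ps)
  case 0
  then show ?case by (cases ps) auto
next
  case (Suc k)
  have "length (filter (\<lambda>b. b) (ind (Suc k) ps)) \<le> length (filter (\<lambda>p. k \<notin> p) ps) + length (filter (\<lambda>p. k \<in> p) ps)"
    using Suc.IH[of "filter (\<lambda>p. k \<notin> p) ps"] Suc.IH[of "map (\<lambda>p. p - {k}) (filter (\<lambda>p. k \<in> p) ps)"]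
    by simp
  also have "\<dots> = length ps" using sum_length_filter_compl[of "\<lambda>p. k \<in> p" ps] by simp
  finally show ?case .
qed

lemma len_filter_split:
  "length (filter P xs) = length (filter (\<lambda>x. P x \<and> Q x) xs) + length (filter (\<lambda>x. P x \<and> \<not> Q x) xs)"
  by (induction xs) auto

lemma ind_cnt:
  "T \<subseteq> {..<m} \<Longrightarrow> even (cnt m T (ind m ps)) \<longleftrightarrow> even (length (filter (\<lambda>p. T \<subseteq> p) ps))"
proof (induction m arbitrary: T ps)
  case 0
  then show ?case by auto
next
  case (Suc k)
  let ?ps0 = "filter (\<lambda>p. k \<notin> p) ps" and ?ps1 = "map (\<lambda>p. p - {k}) (filter (\<lambda>p. k \<in> p) ps)"
  have tk: "take (2^k) (ind (Suc k) ps) = ind k ?ps0" "drop (2^k) (ind (Suc k) ps) = ind k ?ps1"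
    by (simp_all add: ind_len)
  have c: "cnt (Suc k) T (ind (Suc k) ps) = (if k \<in> T then 0 else cnt k T (ind k ?ps0)) + cnt k (T - {k}) (ind k ?ps1)"
    by (simp only: cnt.simps(2) tk)
  have Tk: "T - {k} \<subseteq> {..<k}" using Suc.prems by auto
  have e1: "length (filter (\<lambda>p. T - {k} \<subseteq> p) ?ps1) = length (filter (\<lambda>p. T \<subseteq> p \<and> k \<in> p) ps)"
  proof -
    have "filter (\<lambda>p. T - {k} \<subseteq> p) ?ps1 = map (\<lambda>p. p - {k}) (filter (\<lambda>p. k \<in> p \<and> T - {k} \<subseteq> p - {k}) ps)"
      by (simp add: filter_map filter_filter o_def)
    also have "filter (\<lambda>p. k \<in> p \<and> T - {k} \<subseteq> p - {k}) ps = filter (\<lambda>p. T \<subseteq> p \<and> k \<in> p) ps"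
      by (rule filter_cong) auto
    finally show ?thesis by simp
  qed
  show ?case
  proof (cases "k \<in> T")
    case True
    have "length (filter (\<lambda>p. T \<subseteq> p) ps) = length (filter (\<lambda>p. T \<subseteq> p \<and> k \<in> p) ps)"
      using True by (intro arg_cong[where f=length] filter_cong) auto
    then show ?thesis using True Suc.IH[OF Tk, of ?ps1] e1 by (simp only: c) simp
  next
    case False
    have T: "T \<subseteq> {..<k}" using Suc.prems False
      by (metis lessThan_Suc subset_insert)
    have e0: "length (filter (\<lambda>p. T \<subseteq> p) ?ps0) = length (filter (\<lambda>p. T \<subseteq> p \<and> \<not> k \<in> p) ps)"
      by (simp add: filter_filter conj_commute)
    have "T - {k} = T" using False by auto
    then show ?thesis using False Suc.IH[OF T, of ?ps1] Suc.IH[OF T, of ?ps0] e1 e0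
        len_filter_split[of "\<lambda>p. T \<subseteq> p" ps "\<lambda>p. k \<in> p"]
      by (simp only: c) auto
  qed
qed

definition H :: "nat set \<Rightarrow> nat set \<Rightarrow> nat \<Rightarrow> nat \<Rightarrow> bool" where
  "H f g a b = ((a \<in> f \<and> b \<in> g) \<noteq> (a \<in> g \<and> b \<in> f))"

fun xorH :: "(nat set \<times> nat set) list \<Rightarrow> nat \<Rightarrow> nat \<Rightarrow> bool" where
  "xorH [] a b = False"
| "xorH ((f, g) # rest) a b = (H f g a b \<noteq> xorH rest a b)"

lemma alt_decomp:
  "finite S \<Longrightarrow> (\<forall>a b. A a b \<longrightarrow> a \<in> S \<and> b \<in> S) \<Longrightarrow> (\<forall>a. \<not> A a a) \<Longrightarrow> (\<forall>a b. A a b = A b a)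
   \<Longrightarrow> \<exists>prs. 2 * length prs \<le> card S \<and> (\<forall>a b. A a b = xorH prs a b)"
proof (induction "card S" arbitrary: S A rule: less_induct)
  case less
  show ?case
  proof (cases "\<exists>a b. A a b")
    case False
    then show ?thesis by (intro exI[of _ "[]"]) auto
  next
    case True
    then obtain a b where ab: "A a b" by blast
    have abS: "a \<in> S" "b \<in> S" "a \<noteq> b" using ab less.prems by auto
    define f where "f = {c. A c a}"
    define g where "g = {c. A c b}"
    define A' where "A' = (\<lambda>x y. A x y \<noteq> H f g x y)"
    have sym: "\<And>x y. A x y = A y x" using less.prems by blast
    have dia: "\<And>x. \<not> A x x" using less.prems by blast
    have rowa: "\<not> A' a y" for y using ab sym[of a y] dia[of a] by (auto simp: A'_def H_def f_def g_def)
    have rowb: "\<not> A' b y" for y using ab sym[of b y] sym[of a b] dia[of b] by (auto simp: A'_def H_def f_def g_def)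
    have symA': "A' x y = A' y x" for x y using sym[of x y] by (auto simp: A'_def H_def)
    have diaA': "\<not> A' x x" for x using dia[of x] by (auto simp: A'_def H_def)
    have suppA': "A' x y \<longrightarrow> x \<in> S - {a, b} \<and> y \<in> S - {a, b}" for x y
    proof
      assume h: "A' x y"
      have "x \<noteq> a" "x \<noteq> b" using h rowa rowb by auto
      moreover have "y \<noteq> a" "y \<noteq> b" using h rowa rowb symA' by metis+
      moreover have "x \<in> S" using h less.prems(2) unfolding A'_def H_def f_def g_def by auto
      moreover have "y \<in> S" using h less.prems(2) unfolding A'_def H_def f_def g_def by auto
      ultimately show "x \<in> S - {a, b} \<and> y \<in> S - {a, b}" by auto
    qed
    have "card {a, b} \<le> card S" using abS less.prems(1) by (intro card_mono) auto
    then have c2: "card (S - {a, b}) + 2 = card S" using abS less.prems(1)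
      by (simp add: card_Diff_subset)
    then have cardlt: "card (S - {a, b}) < card S" by linarith
    obtain prs where prs: "2 * length prs \<le> card (S - {a, b})" "\<forall>x y. A' x y = xorH prs x y"
      using less.hyps[OF cardlt, of A'] less.prems(1) suppA' diaA' symA' by blast
    show ?thesis
    proof (intro exI[of _ "(f, g) # prs"] conjI allI)
      show "2 * length ((f, g) # prs) \<le> card S" using prs(1) c2 by simp
      fix x y show "A x y = xorH ((f, g) # prs) x y" using prs(2) by (auto simp: A'_def)
    qed
  qed
qed

definition sd :: "nat set \<Rightarrow> nat set \<Rightarrow> nat set" where "sd X Y = (X - Y) \<union> (Y - X)"

lemma sd_mem[simp]: "x \<in> sd X Y \<longleftrightarrow> ((x \<in> X) \<noteq> (x \<in> Y))"
  by (auto simp: sd_def)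

fun L :: "nat set \<Rightarrow> (nat set \<times> nat set) list \<Rightarrow> nat set list" where
  "L r [] = [r]"
| "L r ((f, g) # rest) = sd r f # sd r g # L (sd (sd r f) g) rest"

lemma L_len: "length (L r prs) = 2 * length prs + 1"
  by (induction r prs rule: L.induct) auto

lemma L_val: "odd (length (filter (\<lambda>p. a \<in> p \<and> b \<in> p) (L r prs))) = ((a \<in> r \<and> b \<in> r) \<noteq> xorH prs a b)"
proof (induction r prs rule: L.induct)
  case (1 r)
  then show ?case by auto
next
  case (2 r f g rest)
  have f2: "odd (length (filter P (x # y # zs))) = (P x \<noteq> (P y \<noteq> odd (length (filter P zs))))" for P x y and zs :: "nat set list"
    by simp
  have bool: "((ar \<noteq> af) \<and> (br \<noteq> bf)) \<noteq> (((ar \<noteq> ag) \<and> (br \<noteq> bg)) \<noteq>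
      ((((ar \<noteq> af) \<noteq> ag) \<and> ((br \<noteq> bf) \<noteq> bg)) \<noteq> X))
    = ((ar \<and> br) \<noteq> (((af \<and> bg) \<noteq> (ag \<and> bf)) \<noteq> X))" for ar af ag br bf bg X
    by (cases ar; cases af; cases ag; cases br; cases bf; cases bg; cases X; simp)
  show ?case
    unfolding L.simps f2 using 2 by (simp only: sd_mem xorH.simps H_def bool)
qed

lemma target_decomp:
  fixes \<sigma> :: "nat set \<Rightarrow> bool"
  shows "\<exists>ps. length ps \<le> m + 2 \<and> (\<forall>T. T \<subseteq> {..<m} \<and> card T \<le> 2 \<longrightarrow> odd (length (filter (\<lambda>p. T \<subseteq> p) ps)) = \<sigma> T)"
proof -
  define d where "d = {a. a < m \<and> \<sigma> {a}}"
  define A where "A = (\<lambda>a b. a < m \<and> b < m \<and> (\<sigma> {a, b} \<noteq> (a \<in> d \<and> b \<in> d)))"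
  have "\<exists>prs. 2 * length prs \<le> card {..<m} \<and> (\<forall>a b. A a b = xorH prs a b)"
  proof (rule alt_decomp)
    show "\<forall>a b. A a b \<longrightarrow> a \<in> {..<m} \<and> b \<in> {..<m}" by (auto simp: A_def)
    show "\<forall>a. \<not> A a a" by (auto simp: A_def d_def)
    show "\<forall>a b. A a b = A b a" by (auto simp: A_def insert_commute)
  qed simp
  then obtain prs where prs: "2 * length prs \<le> m" "\<forall>a b. A a b = xorH prs a b" by auto
  define ps0 where "ps0 = L d prs"
  have ps0: "odd (length (filter (\<lambda>p. a \<in> p \<and> b \<in> p) ps0)) = \<sigma> {a, b}" if "a < m" "b < m" for a b
    using L_val[of a b d prs] prs(2) that unfolding ps0_def A_def by auto
  define ps where "ps = (if odd (length ps0) = \<sigma> {} then ps0 else {} # ps0)"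
  have len: "length ps \<le> m + 2" using prs(1) L_len[of d prs] by (auto simp: ps_def ps0_def)
  have "odd (length (filter (\<lambda>p. T \<subseteq> p) ps)) = \<sigma> T" if T: "T \<subseteq> {..<m}" "card T \<le> 2" for T
  proof (cases "T = {}")
    case True
    then show ?thesis by (auto simp: ps_def)
  next
    case False
    have fin: "finite T" using T(1) finite_subset by blast
    have "card T = 1 \<or> card T = 2" using False fin T(2) card_0_eq[OF fin] by linarith
    then obtain a b where Tab: "T = {a, b}"
      by (metis card_1_singletonE card_2_iff insert_absorb2)
    then have abm: "a < m" "b < m" using T(1) by auto
    have "filter (\<lambda>p. T \<subseteq> p) ps = filter (\<lambda>p. a \<in> p \<and> b \<in> p) ps0"
      using Tab by (auto simp: ps_def)
    then show ?thesis using ps0[OF abm] Tab by simp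
  qed
  then show ?thesis using len by blast
qed



definition covers :: "nat \<Rightarrow> bool list set \<Rightarrow> nat \<Rightarrow> bool" where
  "covers n C \<rho> \<longleftrightarrow> (\<forall>x. length x = n \<longrightarrow> (\<exists>c\<in>C. card {j. j < n \<and> x ! j \<noteq> c ! j} \<le> \<rho>))"

lemma covers_mono: "covers n C \<rho> \<Longrightarrow> \<rho> \<le> \<rho>' \<Longrightarrow> covers n C \<rho>'"
  unfolding covers_def by (blast intro: le_trans)

lemma cover3:
  assumes m: "3 \<le> m"
  shows "covers (2^m) (RM (m - 3) m) (m + 2)"
  unfolding covers_def
proof (intro allI impI)
  fix x :: "bool list" assume lx: "length x = 2^m"
  define \<sigma> where "\<sigma> = (\<lambda>T. odd (cnt m T x))"
  obtain ps where ps: "length ps \<le> m + 2"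
    "\<forall>T. T \<subseteq> {..<m} \<and> card T \<le> 2 \<longrightarrow> odd (length (filter (\<lambda>p. T \<subseteq> p) ps)) = \<sigma> T"
    using target_decomp[of m \<sigma>] by blast
  define e where "e = ind m ps"
  define w where "w = word_add x e"
  have le: "length e = 2^m" by (simp add: e_def ind_len)
  have lw: "length w = 2^m" using lx le by (simp add: w_def word_add_len)
  have "w \<in> RM (m - 3) m"
  proof (rule chk_mem[OF lw], intro allI impI)
    fix T assume T: "T \<subseteq> {..<m} \<and> card T + (m - 3) < m"
    then have "card T \<le> 2" using m by linarith
    then have "odd (length (filter (\<lambda>p. T \<subseteq> p) ps)) = \<sigma> T" using ps(2) T by blast
    then show "even (cnt m T w)"
    proof -
      have "T \<subseteq> {..<m}" using T by blast
      then have i: "even (cnt m T e) = even (length (filter (\<lambda>p. T \<subseteq> p) ps))"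
        unfolding e_def by (rule ind_cnt)
      have "even (cnt m T w) = (even (cnt m T x) = even (cnt m T e))"
        unfolding w_def by (rule cnt_add[OF lx le])
      then show ?thesis using i \<open>odd (length (filter (\<lambda>p. T \<subseteq> p) ps)) = \<sigma> T\<close>
        unfolding \<sigma>_def by simp
    qed
  qed
  moreover have "card {j. j < 2^m \<and> x ! j \<noteq> w ! j} \<le> m + 2"
  proof -
    have "{j. j < 2^m \<and> x ! j \<noteq> w ! j} = {j. j < length e \<and> e ! j}"
      using lx le by (auto simp: w_def word_add_nth)
    also have "card \<dots> = length (filter (\<lambda>b. b) e)" by (simp add: length_filter_conv_card)
    also have "\<dots> \<le> length ps" unfolding e_def by (rule ind_wt)
    finally show ?thesis using ps(1) by linarith
  qed
  ultimately show "\<exists>c\<in>RM (m - 3) m. card {j. j < 2^m \<and> x ! j \<noteq> c ! j} \<le> m + 2" by blast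
qed

lemma cover_rec:
  assumes r: "0 < r" "r < m"
    and c1: "covers (2^(m-1)) (RM r (m-1)) \<rho>1"
    and c2: "covers (2^(m-1)) (RM (r-1) (m-1)) \<rho>2"
  shows "covers (2^m) (RM r m) (\<rho>1 + \<rho>2)"
  unfolding covers_def
proof (intro allI impI)
  fix x :: "bool list" assume lx: "length x = 2^m"
  define h :: nat where "h = 2^(m-1)"
  obtain m' where mm: "m = Suc m'" using r by (cases m) auto
  have m2: "2^m = 2 * h" unfolding h_def mm by simp
  define x1 where "x1 = take h x"
  define x2 where "x2 = drop h x"
  have lx2: "length x = 2 * h" using lx m2 by simp
  have l1: "length x1 = h" unfolding x1_def using lx2 by simp
  have l2: "length x2 = h" unfolding x2_def using lx2 by simp
  obtain u where u: "u \<in> RM r (m-1)" "card {j. j < h \<and> x1 ! j \<noteq> u ! j} \<le> \<rho>1"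
    using c1 l1 unfolding covers_def h_def by blast
  have lu: "length u = h" using RM_len[OF u(1)] by (simp add: h_def)
  define y where "y = word_add x2 u"
  have ly: "length y = h" using l2 lu by (simp add: y_def word_add_len)
  obtain v where v: "v \<in> RM (r-1) (m-1)" "card {j. j < h \<and> y ! j \<noteq> v ! j} \<le> \<rho>2"
    using c2 ly unfolding covers_def h_def by blast
  have lv: "length v = h" using RM_len[OF v(1)] by (simp add: h_def)
  define c where "c = u @ word_add u v"
  have "c \<in> RM r m"
  proof -
    have "c \<in> {u @ word_add u v | u v. u \<in> RM r (m-1) \<and> v \<in> RM (r - 1) (m-1)}"
      using u(1) v(1) c_def by blast
    then show ?thesis using r by (subst RM.simps) simp
  qed
  moreover have "card {j. j < 2^m \<and> x ! j \<noteq> c ! j} \<le> \<rho>1 + \<rho>2"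
  proof -
    have sub: "{j. j < 2^m \<and> x ! j \<noteq> c ! j} \<subseteq> {j. j < h \<and> x1 ! j \<noteq> u ! j} \<union> (\<lambda>j. j + h) ` {j. j < h \<and> y ! j \<noteq> v ! j}"
    proof
      fix j assume j: "j \<in> {j. j < 2^m \<and> x ! j \<noteq> c ! j}"
      show "j \<in> {j. j < h \<and> x1 ! j \<noteq> u ! j} \<union> (\<lambda>j. j + h) ` {j. j < h \<and> y ! j \<noteq> v ! j}"
      proof (cases "j < h")
        case True
        have "x ! j = x1 ! j" using True by (simp add: x1_def)
        moreover have "c ! j = u ! j" using True lu by (simp add: c_def nth_append)
        ultimately show ?thesis using j True by simp
      next
        case False
        have jlt: "j < 2 * h" using j m2 by simp
        then have jj: "j = (j - h) + h" "j - h < h" using False by linarith+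
        have "x ! j = x2 ! (j - h)" using False lx2 unfolding x2_def by simp
        moreover have "c ! j = (u ! (j - h) \<noteq> v ! (j - h))" using False lu lv jj(2)
          by (simp add: c_def nth_append word_add_nth)
        moreover have "y ! (j - h) = (x2 ! (j - h) \<noteq> u ! (j - h))" using jj(2) l2 lu by (simp add: y_def word_add_nth)
        ultimately have "y ! (j - h) \<noteq> v ! (j - h)" using j
          by (cases "u ! (j - h)"; cases "v ! (j - h)"; cases "x2 ! (j - h)"; simp)
        then have "j - h \<in> {j. j < h \<and> y ! j \<noteq> v ! j}" using jj(2) by simp
        then have "j \<in> (\<lambda>j. j + h) ` {j. j < h \<and> y ! j \<noteq> v ! j}" by (rule image_eqI[where f="\<lambda>j. j + h", OF jj(1)])
        then show ?thesis by blast
      qed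
    qed
    have "card {j. j < 2^m \<and> x ! j \<noteq> c ! j} \<le> card ({j. j < h \<and> x1 ! j \<noteq> u ! j} \<union> (\<lambda>j. j + h) ` {j. j < h \<and> y ! j \<noteq> v ! j})"
      by (rule card_mono[OF _ sub]) auto
    also have "\<dots> \<le> card {j. j < h \<and> x1 ! j \<noteq> u ! j} + card ((\<lambda>j. j + h) ` {j. j < h \<and> y ! j \<noteq> v ! j})"
      by (rule card_Un_le)
    also have "\<dots> \<le> \<rho>1 + \<rho>2"
    proof -
      have "card ((\<lambda>j. j + h) ` {j. j < h \<and> y ! j \<noteq> v ! j}) \<le> card {j. j < h \<and> y ! j \<noteq> v ! j}"
        by (rule card_image_le) simp
      then show ?thesis using u(2) v(2) by linarith
    qed
    finally show ?thesis .
  qed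
  ultimately show "\<exists>c\<in>RM r m. card {j. j < 2^m \<and> x ! j \<noteq> c ! j} \<le> \<rho>1 + \<rho>2" by blast
qed

lemma cover_r0: "covers (2^m) (RM 0 m) (2^m)"
  unfolding covers_def
proof (intro allI impI)
  fix x :: "bool list" assume "length x = 2^m"
  have "card {j. j < 2^m \<and> x ! j \<noteq> replicate (2^m) False ! j} \<le> card {..<(2::nat)^m}"
    by (rule card_mono) auto
  then show "\<exists>c\<in>RM 0 m. card {j. j < 2^m \<and> x ! j \<noteq> c ! j} \<le> 2^m"
    using zero_in_RM[of m 0] by auto
qed

lemma cover_gen:
  assumes "3 \<le> s" "2^s \<le> K" "2 \<le> K"
  shows "\<forall>m\<ge>s. covers (2^m) (RM (m - s) m) ((m choose (s - 2)) + K * (m choose (s - 3)))"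
  using assms
proof (induction s rule: nat_induct_at_least)
  case base
  show ?case
  proof (intro allI impI)
    fix m :: nat assume "3 \<le> m"
    then show "covers (2^m) (RM (m - 3) m) ((m choose (3 - 2)) + K * (m choose (3 - 3)))"
      using covers_mono[OF cover3[of m]] base by simp
  qed
next
  case (Suc s)
  have s3: "3 \<le> s" using Suc.hyps by simp
  have IH: "\<forall>m\<ge>s. covers (2^m) (RM (m - s) m) ((m choose (s - 2)) + K * (m choose (s - 3)))"
  proof -
    have "(2::nat)^s \<le> 2^Suc s" by simp
    then have "2^s \<le> K" using Suc.prems(1) by linarith
    then show ?thesis using Suc.IH Suc.prems(2) by blast
  qed
  show ?case
  proof (intro allI impI)
    fix m :: nat assume "Suc s \<le> m"
    then show "covers (2^m) (RM (m - Suc s) m) ((m choose (Suc s - 2)) + K * (m choose (Suc s - 3)))"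
    proof (induction m rule: nat_induct_at_least)
      case base
      have "(1::nat) \<le> (Suc s choose (Suc s - 3))" by (simp add: Suc_leI)
      then have "K \<le> K * (Suc s choose (Suc s - 3))" by simp
      then have "2^Suc s \<le> K * (Suc s choose (Suc s - 3))" using Suc.prems(1) by linarith
      then have "2^Suc s \<le> (Suc s choose (Suc s - 2)) + K * (Suc s choose (Suc s - 3))" by linarith
      then show ?case using covers_mono[OF cover_r0[of "Suc s"]] by simp
    next
      case (Suc m)
      have a: "covers (2^(Suc m - 1)) (RM (Suc m - Suc s) (Suc m - 1)) ((m choose (s - 2)) + K * (m choose (s - 3)))"
        using IH Suc.hyps by (simp add: Suc_diff_le)
      have b: "covers (2^(Suc m - 1)) (RM (Suc m - Suc s - 1) (Suc m - 1)) ((m choose (Suc s - 2)) + K * (m choose (Suc s - 3)))"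
        using Suc.IH by simp
      have "covers (2^Suc m) (RM (Suc m - Suc s) (Suc m))
             (((m choose (s - 2)) + K * (m choose (s - 3))) + ((m choose (Suc s - 2)) + K * (m choose (Suc s - 3))))"
        by (rule cover_rec[OF _ _ a b]) (use Suc.hyps in auto)
      moreover have "((m choose (s - 2)) + K * (m choose (s - 3))) + ((m choose (Suc s - 2)) + K * (m choose (Suc s - 3)))
          = (Suc m choose (Suc s - 2)) + K * (Suc m choose (Suc s - 3))"
      proof -
        have e1: "Suc s - 2 = Suc (s - 2)" "Suc s - 3 = Suc (s - 3)" "s - 2 = Suc (s - 3)" using s3 by auto
        show ?thesis unfolding e1 binomial_Suc_Suc by (simp add: e1(3) algebra_simps)
      qed
      ultimately show ?case by simp
    qed
  qed
qed



lemma gcr_le: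
  assumes cov: "covers n C \<rho>"
  shows "gen_cov_radius t n C \<le> t * \<rho>"
  unfolding gen_cov_radius_def
proof (rule Least_le, intro allI impI)
  fix V :: "nat \<Rightarrow> bool list" assume lV: "\<forall>i<t. length (V i) = n"
  define W where "W = (\<lambda>i. SOME c. c \<in> C \<and> card {j. j < n \<and> V i ! j \<noteq> c ! j} \<le> \<rho>)"
  have Wp: "W i \<in> C \<and> card {j. j < n \<and> V i ! j \<noteq> W i ! j} \<le> \<rho>" if "i < t" for i
  proof -
    have "\<exists>c. c \<in> C \<and> card {j. j < n \<and> V i ! j \<noteq> c ! j} \<le> \<rho>"
      using cov lV that unfolding covers_def by blast
    then show ?thesis unfolding W_def by (rule someI_ex)
  qed
  have "{j. j < n \<and> (\<exists>i<t. V i ! j \<noteq> W i ! j)} = (\<Union>i\<in>{..<t}. {j. j < n \<and> V i ! j \<noteq> W i ! j})"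
    by auto
  then have "t_dist t n V W = card (\<Union>i\<in>{..<t}. {j. j < n \<and> V i ! j \<noteq> W i ! j})"
    unfolding t_dist_def by simp
  also have "\<dots> \<le> (\<Sum>i\<in>{..<t}. card {j. j < n \<and> V i ! j \<noteq> W i ! j})"
    by (rule card_UN_le) simp
  also have "\<dots> \<le> (\<Sum>i\<in>{..<t}. \<rho>)"
    by (rule sum_mono) (use Wp in auto)
  also have "\<dots> = t * \<rho>" by simp
  finally show "\<exists>W. (\<forall>i<t. W i \<in> C) \<and> t_dist t n V W \<le> t * \<rho>" using Wp by blast
qed

lemma gcr_prop:
  assumes "c0 \<in> C"
  shows "\<forall>V. (\<forall>i<t. length (V i) = n) \<longrightarrow> (\<exists>W. (\<forall>i<t. W i \<in> C) \<and> t_dist t n V W \<le> gen_cov_radius t n C)"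
  unfolding gen_cov_radius_def
proof (rule LeastI_ex)
  show "\<exists>\<rho>. \<forall>V. (\<forall>i<t. length (V i) = n) \<longrightarrow> (\<exists>W. (\<forall>i<t. W i \<in> C) \<and> t_dist t n V W \<le> \<rho>)"
  proof (rule exI[of _ n], intro allI impI)
    fix V :: "nat \<Rightarrow> bool list"
    have "t_dist t n V (\<lambda>_. c0) \<le> card {..<n}" unfolding t_dist_def by (rule card_mono) auto
    then show "\<exists>W. (\<forall>i<t. W i \<in> C) \<and> t_dist t n V W \<le> n" using assms by (intro exI[of _ "\<lambda>_. c0"]) auto
  qed
qed

lemma card_len: "card {xs :: bool list. length xs = n} = 2^n"
  using card_lists_length_eq[of "UNIV :: bool set" n] by simp

lemma fin_len: "finite {xs :: bool list. length xs = n}"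
  using finite_lists_length_eq[of "UNIV :: bool set" n] by simp

lemma RM_fin: "finite (RM r m)"
  by (rule finite_subset[OF _ fin_len[of "2^m"]]) (auto simp: RM_len)

lemma RM_card: "card (RM r m) * 2^(m choose (r + 1)) \<le> 2^(2^m)"
proof (induction m arbitrary: r)
  case 0
  show ?case
  proof (cases "r = 0")
    case True
    then show ?thesis by (subst RM.simps) simp
  next
    case False
    then have "RM r 0 = {xs. length xs = 2^0}" by (subst RM.simps) simp
    then show ?thesis using card_len[of 1] by simp
  qed
next
  case (Suc k)
  have RMeq: "RM r (Suc k) = (if r = 0 then {replicate (2^Suc k) False, replicate (2^Suc k) True}
      else if Suc k \<le> r then {w. length w = 2^Suc k}
      else {u @ word_add u v | u v. u \<in> RM r k \<and> v \<in> RM (r - 1) k})"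
    by (subst RM.simps) simp
  show ?case
  proof (cases "r = 0")
    case True
    have "card (RM r (Suc k)) \<le> 2" using True RMeq by (simp add: card_insert_le_m1)
    moreover have "2 * 2^(Suc k) \<le> (2::nat)^(2^Suc k)"
    proof -
      have "Suc k < 2^Suc k" by (rule less_exp)
      then have "Suc k + 1 \<le> 2^Suc k" by simp
      then have "(2::nat)^(Suc k + 1) \<le> 2^(2^Suc k)" by (rule power_increasing) simp
      then show ?thesis by simp
    qed
    ultimately show ?thesis using True
      by (metis binomial_1 One_nat_def add_0 mult_le_mono1 order_trans)
  next
    case False
    show ?thesis
    proof (cases "Suc k \<le> r")
      case True
      then show ?thesis using False True RMeq card_len[of "2^Suc k"] by (simp add: binomial_eq_0)
    next
      case nle: False
      let ?f = "\<lambda>(u, v). u @ word_add u v"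
      have "RM r (Suc k) = ?f ` (RM r k \<times> RM (r - 1) k)" using False nle RMeq by auto
      then have "card (RM r (Suc k)) \<le> card (RM r k) * card (RM (r - 1) k)"
        using card_image_le[of "RM r k \<times> RM (r - 1) k" ?f] RM_fin by (simp add: card_cartesian_product)
      moreover have "Suc k choose (r + 1) = (k choose (r + 1)) + (k choose (r - 1 + 1))"
        using False by simp
      moreover have "card (RM r k) * 2^(k choose (r + 1)) * (card (RM (r - 1) k) * 2^(k choose (r - 1 + 1)))
          \<le> 2^(2^k) * 2^(2^k)"
        by (rule mult_le_mono) (use Suc.IH in auto)
      ultimately show ?thesis
        by (smt (verit) mult.assoc mult.commute mult_le_mono1 order_trans power_add power_Suc mult_2)
    qed
  qed
qed



lemma count_bound:
  fixes C :: "bool list set"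
  assumes fin: "finite C" and n: "0 < n"
    and cov: "\<forall>V. (\<forall>i<t. length (V i) = n) \<longrightarrow> (\<exists>W. (\<forall>i<t. W i \<in> C) \<and> t_dist t n V W \<le> R)"
  shows "(2^n)^t \<le> card C ^ t * (n * 2^t)^R"
proof -
  define U where "U = PiE {..<t} (\<lambda>_. {xs :: bool list. length xs = n})"
  define Ws where "Ws = PiE {..<t} (\<lambda>_. C)"
  define A where "A = {..<n} \<times> Pow {..<t}"
  define Es where "Es = {es. set es \<subseteq> A \<and> length es = R}"
  define \<Phi> where "\<Phi> = (\<lambda>(W :: nat \<Rightarrow> bool list, es :: (nat \<times> nat set) list).
      restrict (\<lambda>i. map (\<lambda>j. (W i ! j) \<noteq> (\<exists>p\<in>set es. fst p = j \<and> i \<in> snd p)) [0..<n]) {..<t})"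
  have cU: "card U = (2^n)^t" unfolding U_def by (simp add: card_PiE card_len)
  have cWs: "card Ws = card C ^ t" unfolding Ws_def by (simp add: card_PiE)
  have fWs: "finite Ws" unfolding Ws_def using fin by (simp add: finite_PiE)
  have fA: "finite A" unfolding A_def by simp
  have cA: "card A = n * 2^t" unfolding A_def by (simp add: card_cartesian_product card_Pow)
  have fEs: "finite Es" unfolding Es_def using finite_lists_length_eq[OF fA] by simp
  have cEs: "card Es = (n * 2^t)^R" unfolding Es_def using card_lists_length_eq[OF fA] cA by simp
  have sub: "U \<subseteq> \<Phi> ` (Ws \<times> Es)"
  proof
    fix V assume VU: "V \<in> U"
    then have lV: "\<forall>i<t. length (V i) = n" and eV: "\<And>i. i \<notin> {..<t} \<Longrightarrow> V i = undefined"
      unfolding U_def by (auto simp: PiE_iff extensional_def)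
    obtain W where W: "\<forall>i<t. W i \<in> C" "t_dist t n V W \<le> R" using cov lV by blast
    define W' where "W' = restrict W {..<t}"
    have W'Ws: "W' \<in> Ws" unfolding W'_def Ws_def using W(1) by auto
    define S where "S = {j. j < n \<and> (\<exists>i<t. V i ! j \<noteq> W i ! j)}"
    have fS: "finite S" unfolding S_def by simp
    have cS: "card S \<le> R" using W(2) unfolding t_dist_def S_def by simp
    define es where "es = map (\<lambda>j. (j, {i. i < t \<and> V i ! j \<noteq> W i ! j})) (sorted_list_of_set S)
        @ replicate (R - card S) (0, {})"
    have esEs: "es \<in> Es"
    proof -
      have "set es \<subseteq> A" unfolding es_def A_def using fS n by (auto simp: S_def)
      moreover have "length es = R" unfolding es_def using cS by simp
      ultimately show ?thesis unfolding Es_def by simp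
    qed
    have key: "(\<exists>p\<in>set es. fst p = j \<and> i \<in> snd p) = (V i ! j \<noteq> W i ! j)" if ij: "i < t" "j < n" for i j
    proof -
      have "(\<exists>p\<in>set es. fst p = j \<and> i \<in> snd p) = (j \<in> S \<and> i < t \<and> V i ! j \<noteq> W i ! j)"
        using fS unfolding es_def by (auto simp: set_replicate_conv_if)
      also have "\<dots> = (V i ! j \<noteq> W i ! j)" using ij unfolding S_def by auto
      finally show ?thesis .
    qed
    have "\<Phi> (W', es) = V"
    proof
      fix i show "\<Phi> (W', es) i = V i"
      proof (cases "i < t")
        case True
        have "map (\<lambda>j. (W' i ! j) \<noteq> (\<exists>p\<in>set es. fst p = j \<and> i \<in> snd p)) [0..<n] = V i"
        proof (rule nth_equalityI)
          show "length (map (\<lambda>j. (W' i ! j) \<noteq> (\<exists>p\<in>set es. fst p = j \<and> i \<in> snd p)) [0..<n]) = length (V i)"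
            using lV True by simp
          fix j assume "j < length (map (\<lambda>j. (W' i ! j) \<noteq> (\<exists>p\<in>set es. fst p = j \<and> i \<in> snd p)) [0..<n])"
          then have j: "j < n" by simp
          show "map (\<lambda>j. (W' i ! j) \<noteq> (\<exists>p\<in>set es. fst p = j \<and> i \<in> snd p)) [0..<n] ! j = V i ! j"
            using key[OF True j] j True unfolding W'_def by auto
        qed
        then show ?thesis using True unfolding \<Phi>_def by simp
      next
        case False
        then show ?thesis using eV[of i] unfolding \<Phi>_def by simp
      qed
    qed
    then show "V \<in> \<Phi> ` (Ws \<times> Es)" using W'Ws esEs by force
  qed
  have "card U \<le> card (\<Phi> ` (Ws \<times> Es))"
    by (rule card_mono[OF _ sub]) (use fWs fEs in simp)
  also have "\<dots> \<le> card (Ws \<times> Es)" by (rule card_image_le) (use fWs fEs in simp)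
  also have "\<dots> = card C ^ t * (n * 2^t)^R" by (simp add: card_cartesian_product cWs cEs)
  finally show ?thesis using cU by simp
qed

lemma lower_nat:
  assumes "s \<le> m" "1 \<le> s"
  shows "(m choose (s - 1)) * t \<le> (m + t) * R_RM t (m - s) m"
proof -
  let ?C = "RM (m - s) m" and ?n = "2^m :: nat" and ?R = "R_RM t (m - s) m"
  have cov: "\<forall>V. (\<forall>i<t. length (V i) = ?n) \<longrightarrow> (\<exists>W. (\<forall>i<t. W i \<in> ?C) \<and> t_dist t ?n V W \<le> ?R)"
    unfolding R_RM_def by (rule gcr_prop[OF zero_in_RM])
  have cb: "(2^?n)^t \<le> card ?C ^ t * (?n * 2^t)^?R"
    by (rule count_bound[OF RM_fin _ cov]) simp
  have D: "m choose (m - s + 1) = m choose (s - 1)"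
  proof -
    have "m - (m - s + 1) = s - 1" using assms by simp
    then show ?thesis using binomial_symmetric[of "m - s + 1" m] assms by simp
  qed
  have rc: "card ?C * 2^(m choose (s - 1)) \<le> 2^?n" using RM_card[of "m - s" m] D by simp
  let ?D = "m choose (s - 1)"
  have p1: "(?n * 2^t)^?R = (2::nat)^((m + t) * ?R)" by (simp add: power_add power_mult)
  have "(2::nat)^(?n * t) * 2^(?D * t) \<le> card ?C ^ t * 2^((m + t) * ?R) * 2^(?D * t)"
    using cb p1 by (simp add: power_mult)
  also have "\<dots> = (card ?C * 2^?D)^t * 2^((m + t) * ?R)"
  proof -
    have "(card ?C * 2^?D)^t = card ?C^t * 2^(?D*t)" by (simp add: power_mult_distrib power_mult)
    then show ?thesis by simp
  qed
  also have "\<dots> \<le> (2^?n)^t * 2^((m + t) * ?R)"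
    by (rule mult_le_mono1) (rule power_mono[OF rc], simp)
  also have "\<dots> = 2^(?n * t) * 2^((m + t) * ?R)" by (simp add: power_mult)
  finally have "(2::nat)^(?D * t) \<le> 2^((m + t) * ?R)" by simp
  then show ?thesis by simp
qed



lemma prod_lb:
  fixes x :: real
  shows "real (Suc j) \<le> x \<Longrightarrow> (\<Prod>l<Suc j. (x - real l)) \<ge> x^(Suc j) - (real (Suc j))^2 * x^j"
proof (induction j)
  case 0
  then show ?case by simp
next
  case (Suc j)
  define q where "q = real (Suc j)"
  define y where "y = x^j"
  have x0: "x \<ge> 0" using Suc.prems by simp
  have y0: "y \<ge> 0" unfolding y_def using x0 by simp
  have q0: "q \<ge> 0" unfolding q_def by simp
  have d: "x - q \<ge> 0" using Suc.prems unfolding q_def by simp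
  have IH: "(\<Prod>l<Suc j. (x - real l)) \<ge> x * y - q^2 * y"
    using Suc.IH Suc.prems unfolding q_def y_def by simp
  have "(\<Prod>l<Suc (Suc j). (x - real l)) = (\<Prod>l<Suc j. (x - real l)) * (x - q)"
    unfolding q_def by simp
  also have "\<dots> \<ge> (x * y - q^2 * y) * (x - q)"
    by (rule mult_right_mono[OF IH d])
  finally have A: "(\<Prod>l<Suc (Suc j). (x - real l)) \<ge> (x * y - q^2 * y) * (x - q)" .
  have B: "(x * y - q^2 * y) * (x - q) - (x * x * y - (q + 1)^2 * x * y) = q * x * y + x * y + q^3 * y"
    by (simp add: algebra_simps power2_eq_square power3_eq_cube)
  have C: "q * x * y + x * y + q^3 * y \<ge> 0" using x0 y0 q0 by simp
  have "x^(Suc (Suc j)) - (real (Suc (Suc j)))^2 * x^(Suc j) = x * x * y - (q + 1)^2 * x * y"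
    unfolding q_def y_def by (simp add: algebra_simps)
  then show ?case using A B C by linarith
qed

lemma f_bound:
  fixes m i t :: nat
  assumes m: "i + 2 \<le> m" and t: "1 \<le> t"
  shows "\<bar>real t * real (m choose (i + 2)) / (real m + real t) - real t / fact (i + 2) * real m ^ (i + 1)\<bar>
         \<le> real t * ((real (i + 2))^2 + real t) / fact (i + 2) * real m ^ i"
proof -
  define k where "k = i + 2"
  define P where "P = real (m choose k) * fact k"
  have Pprod: "P = (\<Prod>l<k. (real m - real l))"
  proof -
    have "real (m choose k) = (real m gchoose k)" by (simp add: binomial_gbinomial)
    then have "P = (real m gchoose k) * fact k" unfolding P_def by simp
    also have "\<dots> = (\<Prod>l = 0..<k. (real m - of_nat l))" by (rule gbinomial_mult_fact')
    finally show ?thesis by (simp add: atLeast0LessThan)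
  qed
  have Pup: "P \<le> real m ^ k"
  proof -
    have "(m choose k) * fact k \<le> m ^ k" by (rule binomial_fact_pow)
    then have "real ((m choose k) * fact k) \<le> real (m ^ k)" by (simp only: of_nat_le_iff)
    then show ?thesis unfolding P_def by simp
  qed
  have Plo: "P \<ge> real m ^ (i + 2) - (real (i + 2))^2 * real m ^ (i + 1)"
    using prod_lb[of "i + 1" "real m"] m unfolding Pprod k_def by simp
  define N where "N = P - real m ^ (i + 1) * (real m + real t)"
  have mp: "real m > 0" using m by simp
  have mt: "real m + real t > 0" using m by simp
  have Nup: "N \<le> 0"
  proof -
    have "real m ^ (i + 1) * (real m + real t) \<ge> real m ^ (i + 2)"
      using mp by (simp add: algebra_simps)
    then show ?thesis using Pup unfolding N_def k_def by simp
  qed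
  have Nlo: "N \<ge> - (((real (i + 2))^2 + real t) * real m ^ (i + 1))"
    using Plo unfolding N_def by (simp add: algebra_simps)
  have feq: "real t * real (m choose (i + 2)) / (real m + real t) - real t / fact (i + 2) * real m ^ (i + 1)
      = real t * N / (fact k * (real m + real t))"
  proof -
    have gen: "a * c / d - a / f * x = a * (c * f - x * d) / (f * d)" if "f \<noteq> 0" "d \<noteq> 0" for a c d f x :: real
      using that by (simp add: field_simps)
    have "fact k \<noteq> (0::real)" by simp
    from gen[OF this, of "real m + real t" "real t" "real (m choose k)" "real m ^ (i + 1)"] mt
    show ?thesis unfolding N_def P_def k_def by simp
  qed
  have "\<bar>real t * N / (fact k * (real m + real t))\<bar> = real t * (- N) / (fact k * (real m + real t))"
    using Nup mt by (simp add: abs_div abs_mult abs_of_nonpos)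
  also have "\<dots> \<le> real t * (((real (i + 2))^2 + real t) * real m ^ (i + 1)) / (fact k * (real m + real t))"
    using Nlo mt by (intro divide_right_mono mult_left_mono) simp_all
  also have "\<dots> \<le> real t * ((real (i + 2))^2 + real t) / fact k * real m ^ i"
  proof -
    have "real m ^ (i + 1) \<le> (real m + real t) * real m ^ i"
      using mp by (simp add: algebra_simps)
    then have "real m ^ (i + 1) / (real m + real t) \<le> real m ^ i"
      using mt by (simp add: divide_le_eq mult.commute)
    then have "real t * ((real (i + 2))^2 + real t) / fact k * (real m ^ (i + 1) / (real m + real t))
        \<le> real t * ((real (i + 2))^2 + real t) / fact k * real m ^ i"
      by (intro mult_left_mono) simp_all
    then show ?thesis by (simp add: field_simps)
  qed
  finally show ?thesis using feq unfolding k_def by simp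
qed

lemma ln_ge1: "3 \<le> x \<Longrightarrow> 1 \<le> ln (x::real)"
proof -
  assume x: "3 \<le> x"
  have "exp 1 \<le> (3::real)" using exp_le by simp
  then have "exp 1 \<le> x" using x by linarith
  then show ?thesis using x by (metis exp_gt_zero ln_exp ln_le_cancel_iff order.strict_trans2)
qed

theorem theorem15:
  fixes t s :: nat
  assumes "t \<ge> 1" and "s \<ge> 3"
  shows "\<exists>f g :: nat \<Rightarrow> real.
           f \<in> O(\<lambda>m. real m ^ (s - 3) * ln (real m)) \<and>
           g \<in> O(\<lambda>m. real m ^ (s - 3)) \<and>
           (\<forall>m\<ge>s.
              real t / fact (s - 1) * real m ^ (s - 2) + f m \<le> real (R_RM t (m - s) m) \<and>
              real (R_RM t (m - s) m) \<le> real t / fact (s - 2) * real m ^ (s - 2) + g m)"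
proof -
  define i where "i = s - 3"
  have si: "s = i + 3" using assms(2) unfolding i_def by simp
  have e1: "s - 1 = i + 2" "s - 2 = i + 1" "s - 3 = i" using si by auto
  define K :: nat where "K = 2^s"
  have "(2::nat)^1 \<le> 2^s" by (rule power_increasing) (use assms(2) in simp_all)
  then have K: "2^s \<le> K" "2 \<le> K" unfolding K_def by simp_all
  define f :: "nat \<Rightarrow> real" where
    "f = (\<lambda>m. real t * real (m choose (i + 2)) / (real m + real t) - real t / fact (i + 2) * real m ^ (i + 1))"
  define g :: "nat \<Rightarrow> real" where "g = (\<lambda>m. real t * real K * real m ^ i)"
  define c :: real where "c = real t * ((real (i + 2))^2 + real t) / fact (i + 2)"
  have fO: "f \<in> O(\<lambda>m. real m ^ i * ln (real m))"
  proof (rule bigoI[where c = c])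
    show "\<forall>\<^sub>F m in at_top. norm (f m) \<le> c * norm (real m ^ i * ln (real m))"
      unfolding eventually_at_top_linorder
    proof (intro exI[of _ "i + 3"] allI impI)
      fix m :: nat assume m: "i + 3 \<le> m"
      have fb: "\<bar>f m\<bar> \<le> c * real m ^ i" unfolding f_def c_def
        by (rule f_bound) (use m assms(1) in simp_all)
      have l1: "1 \<le> ln (real m)" using m by (intro ln_ge1) simp
      have c0: "c \<ge> 0" unfolding c_def by simp
      have "c * real m ^ i \<le> c * (real m ^ i * ln (real m))"
        using l1 c0 by (intro mult_left_mono) (simp_all add: mult_le_cancel_left1)
      moreover have "norm (real m ^ i * ln (real m)) = real m ^ i * ln (real m)"
        using l1 by simp
      ultimately show "norm (f m) \<le> c * norm (real m ^ i * ln (real m))" using fb by simp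
    qed
  qed
  have gO: "g \<in> O(\<lambda>m. real m ^ i)"
  proof (rule bigoI[where c = "real t * real K"])
    show "\<forall>\<^sub>F m in at_top. norm (g m) \<le> real t * real K * norm (real m ^ i)"
      by (simp add: g_def)
  qed
  have bounds: "real t / fact (s - 1) * real m ^ (s - 2) + f m \<le> real (R_RM t (m - s) m) \<and>
              real (R_RM t (m - s) m) \<le> real t / fact (s - 2) * real m ^ (s - 2) + g m" if m: "m \<ge> s" for m
  proof
    have "(m choose (s - 1)) * t \<le> (m + t) * R_RM t (m - s) m"
      by (rule lower_nat) (use m assms in auto)
    then have "real (m choose (i + 2)) * real t \<le> (real m + real t) * real (R_RM t (m - s) m)"
      unfolding e1 by (metis of_nat_add of_nat_le_iff of_nat_mult)
    then have "real t * real (m choose (i + 2)) / (real m + real t) \<le> real (R_RM t (m - s) m)"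
      using m si by (simp add: divide_le_eq mult.commute)
    then show "real t / fact (s - 1) * real m ^ (s - 2) + f m \<le> real (R_RM t (m - s) m)"
      unfolding f_def e1 by simp
  next
    have cov: "covers (2^m) (RM (m - s) m) ((m choose (s - 2)) + K * (m choose (s - 3)))"
      using cover_gen[OF assms(2) K] m by blast
    have "R_RM t (m - s) m \<le> t * ((m choose (i + 1)) + K * (m choose i))"
      unfolding R_RM_def using gcr_le[OF cov] e1 by simp
    then have R1: "real (R_RM t (m - s) m) \<le> real t * (real (m choose (i + 1)) + real K * real (m choose i))"
      by (metis of_nat_add of_nat_le_iff of_nat_mult)
    have b1: "real (m choose (i + 1)) \<le> real m ^ (i + 1) / fact (i + 1)"
    proof -
      have "(m choose (i + 1)) * fact (i + 1) \<le> m ^ (i + 1)" by (rule binomial_fact_pow)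
      then have "real (m choose (i + 1)) * fact (i + 1) \<le> real m ^ (i + 1)"
        by (metis of_nat_fact of_nat_le_iff of_nat_mult of_nat_power)
      then show ?thesis by (simp add: le_divide_eq)
    qed
    have b2: "real (m choose i) \<le> real m ^ i"
    proof -
      have "m choose i \<le> m ^ i" by (rule binomial_le_pow) (use m si in simp)
      then show ?thesis by (metis of_nat_le_iff of_nat_power)
    qed
    have "real t * (real (m choose (i + 1)) + real K * real (m choose i))
        \<le> real t * (real m ^ (i + 1) / fact (i + 1) + real K * real m ^ i)"
      using b1 b2 by (intro mult_left_mono add_mono) simp_all
    also have "\<dots> = real t / fact (s - 2) * real m ^ (s - 2) + g m"
      unfolding g_def e1 by (simp add: algebra_simps)
    finally show "real (R_RM t (m - s) m) \<le> real t / fact (s - 2) * real m ^ (s - 2) + g m"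
      using R1 by linarith
  qed
  show ?thesis
    using fO gO bounds unfolding e1 by blast
qed


end
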